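(* For every integer $j\ge0$ let \[ \beta_j(x)=\sum_{s=0}^j\binom{j-\frac12}{s}\binom{j}{s}x^{2j-2s}(x^2-1)^s . \] Then $\beta_j(x)=P_{2j}(x)$, where $P_n(x)=\frac{1}{2^nn!}\frac{d^n}{dx^n}(x^2-1)^n$ is the $n$-th Legendre polynomial.
   Context: $\binom{j-\frac12}{s}=\frac{(j-\frac12)(j-\frac32)\cdots(j-\frac12-s+1)}{s!}$. *)

theory Defs
  imports Complex_Main "HOL-Computational_Algebra.Polynomial"
begin

definition legendre_poly :: "nat \<Rightarrow> real poly" where
  "legendre_poly n = smult (1 / (2 ^ n * fact n)) ((pderiv ^^ n) ([:-1, 0, 1:] ^ n))"

definition beta :: "nat \<Rightarrow> real \<Rightarrow> real" where
  "beta j x = (\<Sum>s=0..j. ((real j - 1/2) gchoose s) * real (j choose s)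
                 * x ^ (2*j - 2*s) * (x^2 - 1) ^ s)"

end

theory Submission
  imports Defs
begin

abbreviation U :: "real poly" where "U \<equiv> [:-1, 0, 1:]"

lemma pderiv_U: "pderiv U = monom 2 1"
  by (simp add: pderiv_pCons monom_altdef)

lemma pderiv_term:
  "pderiv (monom 1 a * U^b) = smult (of_nat a) (monom 1 (a-1) * U^b)
     + smult (2*of_nat b) (monom 1 (Suc a) * U^(b-1))"
proof -
  have 1: "monom (real a) (a - 1) = smult (real a) (monom 1 (a-1))" by (simp add: smult_monom)
  have 2: "monom 1 a * (monom 2 1 * V) = smult 2 (monom 1 (Suc a) * V)" for V :: "real poly"
  proof -
    have "monom (2::real) (Suc a) = smult 2 (monom 1 (Suc a))" by (simp add: smult_monom)
    then show ?thesis by (simp add: mult.assoc[symmetric] mult_monom)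
  qed
  show ?thesis
    by (simp add: pderiv_mult pderiv_power pderiv_monom pderiv_U 1 2 algebra_simps del: One_nat_def)
qed

definition cc :: "nat \<Rightarrow> nat \<Rightarrow> nat \<Rightarrow> real" where
 "cc n m p = (if p \<le> m \<and> m \<le> 2*p then 2^(2*p-m) * fact n / fact (n-p) * fact m / (fact (m-p) * fact (2*p-m)) else 0)"

lemma cc_rec:
  assumes "p \<le> n"
  shows "cc n (Suc m) p = cc n m p * of_nat (2*p-m) + (if p = 0 then 0 else cc n m (p-1) * (2 * of_nat (n+1-p)))"
proof (cases p)
  case 0
  then show ?thesis by (simp add: cc_def)
next
  case (Suc q)
  consider "m < q" | "m = q" | "q < m \<and> m \<le> 2*q" | "m = 2*q+1" | "m = 2*q+2" | "m > 2*q+2" by linarith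
  then show ?thesis
  proof cases
    case 1 then show ?thesis using Suc by (simp add: cc_def)
  next
    case 2
    define C where "C = n - (q+1)"
    have n: "n = q + 1 + C" using assms Suc C_def by simp
    have e: "n - Suc q = C" "n - q = Suc C" "Suc n - Suc q = Suc C" using n Suc by auto
    have L: "cc n (Suc m) p = 2^(Suc q) * fact n / fact C" using Suc 2 e by (simp add: cc_def)
    have R1: "cc n m p = 0" using Suc 2 by (simp add: cc_def)
    have R2: "cc n m (p-1) = 2^q * fact n / fact (Suc C)" using Suc 2 e by (simp add: cc_def)
    have N: "n + 1 - p = Suc C" using e Suc by simp
    have "(2::real)^(Suc q) * fact n / fact C = 2^q * fact n / fact (Suc C) * (2 * of_nat (Suc C))"
      by (simp only: fact_Suc) (simp add: field_simps del: of_nat_Suc)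
    note A = this
    have pnz: "p \<noteq> 0" using Suc by simp
    show ?thesis unfolding L R1 R2 N if_not_P[OF pnz] by (subst A) simp
  next
    case 3
    define A where "A = m - q - 1"
    define B where "B = 2*q - m"
    have q: "q = A + B + 1" and m: "m = 2*A+B+2" using 3 unfolding A_def B_def by linarith+
    define C where "C = n - (A+B+2)"
    have n: "n = A+B+2 + C" using assms Suc q C_def by simp
    have e: "n - Suc q = C" "n - q = Suc C" "Suc n - Suc q = Suc C" using n Suc q by auto
    have L: "cc n (Suc m) p = 2^(Suc B) * fact n / fact C * fact (Suc (2*A+B+2)) / (fact (Suc A) * fact (Suc B))"
      using Suc e q m by (simp add: cc_def)
    have R1: "cc n m p = 2^(Suc (Suc B)) * fact n / fact C * fact (2*A+B+2) / (fact A * fact (Suc (Suc B)))"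
      using Suc e q m by (simp add: cc_def)
    have R2: "cc n m (p-1) = 2^B * fact n / fact (Suc C) * fact (2*A+B+2) / (fact (Suc A) * fact B)"
      using Suc e q m by (simp add: cc_def)
    have N: "n + 1 - p = Suc C" "2*p - m = Suc (Suc B)" using e Suc q m by simp_all
    have "(2::real)^(Suc B) * fact n / fact C * fact (Suc (2*A+B+2)) / (fact (Suc A) * fact (Suc B))
      = 2^(Suc (Suc B)) * fact n / fact C * fact (2*A+B+2) / (fact A * fact (Suc (Suc B))) * of_nat (Suc (Suc B))
       + 2^B * fact n / fact (Suc C) * fact (2*A+B+2) / (fact (Suc A) * fact B) * (2 * of_nat (Suc C))"
      by (simp only: fact_Suc) (simp add: field_simps del: of_nat_Suc, simp add: algebra_simps)
    note A = this
    have pnz: "p \<noteq> 0" using Suc by simp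
    show ?thesis unfolding L R1 R2 N if_not_P[OF pnz] by (subst A) simp
  next
    case 4
    define C where "C = n - (q+1)"
    have n: "n = q + 1 + C" using assms Suc C_def by simp
    have e: "n - Suc q = C" "n - q = Suc C" "Suc n - Suc q = Suc C" using n Suc by auto
    have L: "cc n (Suc m) p = fact n / fact C * fact (Suc (Suc (2*q))) / fact (Suc q)"
      using Suc e 4 by (simp add: cc_def)
    have R1: "cc n m p = 2 * fact n / fact C * fact (Suc (2*q)) / fact q"
      using Suc e 4 by (simp add: cc_def)
    have R2: "cc n m (p-1) = 0"
      using Suc e 4 by (simp add: cc_def)
    have N: "2*p - m = 1" using Suc 4 by simp
    have "(fact n::real) / fact C * fact (Suc (Suc (2*q))) / fact (Suc q) = 2 * fact n / fact C * fact (Suc (2*q)) / fact q"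
      by (simp only: fact_Suc) (simp add: field_simps del: of_nat_Suc, simp add: algebra_simps)
    note A = this
    have pnz: "p \<noteq> 0" using Suc by simp
    show ?thesis unfolding L R1 R2 N if_not_P[OF pnz] by (subst A) simp
  next
    case 5 then show ?thesis using Suc by (simp add: cc_def)
  next
    case 6 then show ?thesis using Suc by (simp add: cc_def)
  qed
qed


lemma pderiv_sum': "pderiv (sum f A) = (\<Sum>x\<in>A. pderiv (f x))"
  using higher_pderiv_sum[of 1 f A] by simp

lemma cc0: "cc n 0 p = (if p = 0 then 1 else 0)"
  by (simp add: cc_def)

lemma Dform:
  "(pderiv^^m) (U^n) = (\<Sum>p=0..n. smult (cc n m p) (monom 1 (2*p-m) * U^(n-p)))"
proof (induction m)
  case 0
  have "(\<Sum>p=0..n. smult (cc n 0 p) (monom 1 (2*p-0) * U^(n-p))) = (\<Sum>p=0..n. if p = 0 then U^n else 0)"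
    by (intro sum.cong) (auto simp: cc0)
  also have "\<dots> = U^n" by simp
  finally show ?case by simp
next
  case (Suc m)
  define T where "T p = monom 1 (2*p - Suc m) * U^(n-p)" for p
  define h where "h p = (if p = 0 then 0 else cc n m (p-1) * (2 * of_nat (n+1-p)))" for p
  have "(pderiv^^Suc m) (U^n) = pderiv ((pderiv^^m) (U^n))" by simp
  also have "\<dots> = (\<Sum>p=0..n. smult (cc n m p) (pderiv (monom 1 (2*p-m) * U^(n-p))))"
    unfolding Suc.IH by (simp add: pderiv_sum' pderiv_smult)
  also have "\<dots> = (\<Sum>p=0..n. smult (cc n m p * of_nat (2*p-m)) (T p))
       + (\<Sum>p=0..n. smult (cc n m p * (2 * of_nat (n-p))) (monom 1 (Suc (2*p-m)) * U^(n-p-1)))"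
    unfolding pderiv_term T_def by (simp add: sum.distrib smult_add_right mult.assoc)
  also have "(\<Sum>p=0..n. smult (cc n m p * (2 * of_nat (n-p))) (monom 1 (Suc (2*p-m)) * U^(n-p-1)))
      = (\<Sum>p=0..n. smult (h (Suc p)) (T (Suc p)))"
  proof (intro sum.cong refl)
    fix p assume "p \<in> {0..n}"
    show "smult (cc n m p * (2 * of_nat (n-p))) (monom 1 (Suc (2*p-m)) * U^(n-p-1)) = smult (h (Suc p)) (T (Suc p))"
    proof (cases "m \<le> 2*p")
      case True
      then have "Suc (2*p-m) = 2 * Suc p - Suc m" by simp
      then show ?thesis unfolding h_def T_def by simp
    next
      case False
      then have "cc n m p = 0" by (simp add: cc_def)
      then show ?thesis unfolding h_def T_def by simp
    qed
  qed
  also have "(\<Sum>p=0..n. smult (h (Suc p)) (T (Suc p))) = (\<Sum>p=0..n. smult (h p) (T p))"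
  proof -
    have "(\<Sum>p=0..n. smult (h (Suc p)) (T (Suc p))) = (\<Sum>p=Suc 0..Suc n. smult (h p) (T p))"
      by (rule sum.shift_bounds_cl_Suc_ivl[symmetric])
    also have "\<dots> = (\<Sum>p=0..Suc n. smult (h p) (T p))"
      by (simp add: sum.atLeast_Suc_atMost h_def)
    also have "\<dots> = (\<Sum>p=0..n. smult (h p) (T p))"
      by (simp add: h_def)
    finally show ?thesis .
  qed
  also have "(\<Sum>p=0..n. smult (cc n m p * of_nat (2*p-m)) (T p)) + (\<Sum>p=0..n. smult (h p) (T p))
     = (\<Sum>p=0..n. smult (cc n (Suc m) p) (T p))"
    unfolding sum.distrib[symmetric] smult_add_left[symmetric]
    by (intro sum.cong refl) (simp add: cc_rec h_def)
  finally show ?case unfolding T_def .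
qed


lemma prodG:
  "s \<le> j \<Longrightarrow> (\<Prod>i=0..<s. real j - 1/2 - real i) * 4^s * fact (2*j-2*s) * fact j = fact (2*j) * fact (j-s)"
proof (induction s)
  case 0
  then show ?case by simp
next
  case (Suc s)
  define t where "t = j - Suc s"
  have j: "j = s + 1 + t" using Suc.prems t_def by simp
  define Pr where "Pr = (\<Prod>i=0..<s. real j - 1/2 - real i)"
  have e1: "2*j - 2*s = Suc (Suc (2*t))" "j - s = Suc t" "2*j - 2*Suc s = 2*t" "j - Suc s = t"
    using j by auto
  have IH: "Pr * 4^s * fact (Suc (Suc (2*t))) * fact j = fact (2*j) * fact (Suc t)"
    using Suc.IH Suc.prems e1 unfolding Pr_def by simp
  have f: "(fact (Suc (Suc (2*t))) :: real) = (2 * (real t + 1)) * ((2 * real t + 1) * fact (2*t))"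
    by (simp add: algebra_simps)
  have IH2: "(2 * (real t + 1)) * (Pr * 4^s * ((2 * real t + 1) * fact (2*t)) * fact j) = (2 * (real t + 1)) * (fact (2*j) * fact t / 2)"
    using IH unfolding f by (simp add: algebra_simps)
  have X: "Pr * 4^s * ((2 * real t + 1) * fact (2*t)) * fact j = fact (2*j) * fact t / 2"
    using IH2 by (subst (asm) mult_left_cancel) auto
  have last: "real j - 1/2 - real s = real t + 1/2" using j by simp
  have "(\<Prod>i=0..<Suc s. real j - 1/2 - real i) * 4^Suc s * fact (2*j-2*Suc s) * fact j
      = Pr * (real t + 1/2) * 4^Suc s * fact (2*t) * fact j"
    unfolding Pr_def using e1 last by simp
  also have "\<dots> = 2 * (Pr * 4^s * ((2 * real t + 1) * fact (2*t)) * fact j)"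
    by (simp add: algebra_simps)
  also have "\<dots> = 2 * (fact (2*j) * fact t / 2)" by (simp only: X)
  also have "\<dots> = fact (2*j) * fact (j - Suc s)" using e1 by simp
  finally show ?case .
qed

lemma coefG:
  assumes "s \<le> j"
  shows "((real j - 1/2) gchoose s) * real (j choose s) = fact (2*j) / (4^s * fact s * fact s * fact (2*j-2*s))"
proof -
  have g: "((real j - 1/2) gchoose s) = (\<Prod>i=0..<s. real j - 1/2 - real i) / fact s"
    using gbinomial_mult_fact'[of "real j - 1/2" s] by (simp add: field_simps)
  have c: "real (j choose s) = fact j / (fact s * fact (j-s))"
    using assms by (simp add: binomial_fact)
  have P: "(\<Prod>i=0..<s. real j - 1/2 - real i) = fact (2*j) * fact (j-s) / (4^s * fact (2*j-2*s) * fact j)"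
    using prodG[OF assms] by (simp add: field_simps)
  show ?thesis unfolding g c P by (simp add: field_simps power_mult_distrib flip: power_mult)
qed


theorem lemma6p8:
  fixes j :: nat and x :: real
  shows "beta j x = poly (legendre_poly (2*j)) x"
proof -
  define f where "f p = cc (2*j) (2*j) p * x^(2*p-2*j) * (x^2-1)^(2*j-p)" for p
  have pU: "poly U x = x^2 - 1" by (simp add: power2_eq_square algebra_simps)
  have "poly (legendre_poly (2*j)) x = 1 / (2^(2*j) * fact (2*j)) * (\<Sum>p=0..2*j. f p)"
    unfolding legendre_poly_def Dform f_def
    by (simp add: poly_sum poly_monom pU power2_eq_square mult.assoc)
  also have "(\<Sum>p=0..2*j. f p) = (\<Sum>p=j..2*j. f p)"
    by (rule sum.mono_neutral_right) (auto simp: cc_def f_def)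
  also have "\<dots> = (\<Sum>s=0..j. f (2*j - s))"
    by (rule sum.reindex_bij_witness[of _ "\<lambda>p. 2*j-p" "\<lambda>s. 2*j-s"]) auto
  also have "1 / (2^(2*j) * fact (2*j)) * (\<Sum>s=0..j. f (2*j - s)) = beta j x"
    unfolding beta_def sum_distrib_left
  proof (intro sum.cong refl)
    fix s assume "s \<in> {0..j}"
    then have sj: "s \<le> j" by simp
    have i1: "2*(2*j-s) - 2*j = 2*j - 2*s" "2*j - (2*j-s) = s" using sj by auto
    have ccv: "cc (2*j) (2*j) (2*j-s) = 2^(2*j-2*s) * fact (2*j) / fact s * fact (2*j) / (fact s * fact (2*j-2*s))"
      using sj i1 by (simp add: cc_def)
    have p2: "(2::real)^(2*j) = 2^(2*j-2*s) * 4^s"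
    proof -
      have "(4::real)^s = 2^(2*s)" by (simp add: power_mult)
      moreover have "(2::real)^(2*j) = 2^(2*j-2*s) * 2^(2*s)"
        using sj by (simp flip: power_add)
      ultimately show ?thesis by simp
    qed
    show "1 / (2^(2*j) * fact (2*j)) * f (2*j - s) = ((real j - 1/2) gchoose s) * real (j choose s) * x^(2*j-2*s) * (x^2-1)^s"
      unfolding f_def i1 ccv coefG[OF sj] p2 by (simp add: field_simps)
  qed
  finally show ?thesis by simp
qed

end
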